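(* Let $m\ge 0$ be an integer and $\mathbf{X},\mathbf{Y}\in\{0,1\}^{m\times m}$. Then $\mathbb{D}_{1,0}(\mathbf{X})\cap\mathbb{D}_{1,0}(\mathbf{Y})\neq\emptyset$ if and only if $\mathbb{I}_{1,0}(\mathbf{X})\cap\mathbb{I}_{1,0}(\mathbf{Y})\neq\emptyset$; and $\mathbb{D}_{0,1}(\mathbf{X})\cap\mathbb{D}_{0,1}(\mathbf{Y})\neq\emptyset$ if and only if $\mathbb{I}_{0,1}(\mathbf{X})\cap\mathbb{I}_{0,1}(\mathbf{Y})\neq\emptyset$.
   Context: For a binary array $\mathbf{X}$, $\mathbb{D}_{t_r,t_c}(\mathbf{X})$ denotes the set of all arrays obtained from $\mathbf{X}$ by deleting any $t_r$ rows and any $t_c$ columns, and $\mathbb{I}_{t_r,t_c}(\mathbf{X})$ the set of all binary arrays obtained from $\mathbf{X}$ by inserting $t_r$ rows and $t_c$ columns (arbitrary binary content, arbitrary positions). *)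

theory Defs
  imports Main
begin

type_synonym barray = "bool list list"

definition nrows :: "barray \<Rightarrow> nat" where
  "nrows X = length X"

definition ncols :: "barray \<Rightarrow> nat" where
  "ncols X = (if X = [] then 0 else length (hd X))"

definition is_array :: "nat \<Rightarrow> nat \<Rightarrow> barray \<Rightarrow> bool" where
  "is_array m n X \<longleftrightarrow> length X = m \<and> (\<forall>r\<in>set X. length r = n)"

definition del_rc :: "nat set \<Rightarrow> nat set \<Rightarrow> barray \<Rightarrow> barray" where
  "del_rc R C X = map (\<lambda>r. nths r (- C)) (nths X (- R))"

definition Del :: "nat \<Rightarrow> nat \<Rightarrow> barray \<Rightarrow> barray set" where
  "Del tr tc X = {del_rc R C X | R C.
      R \<subseteq> {..<nrows X} \<and> card R = tr \<and> C \<subseteq> {..<ncols X} \<and> card C = tc}"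

text \<open>I_{tr,tc}(X): all binary arrays obtained by inserting tr rows and tc columns
  (arbitrary content and positions), i.e. all (rows+tr) x (cols+tc) arrays Z from
  which X arises by deleting tr rows and tc columns.\<close>
definition Ins :: "nat \<Rightarrow> nat \<Rightarrow> barray \<Rightarrow> barray set" where
  "Ins tr tc X = {Z. is_array (nrows X + tr) (ncols X + tc) Z \<and> X \<in> Del tr tc Z}"

end

theory Submission
  imports Defs
begin

definition dl :: "nat \<Rightarrow> 'a list \<Rightarrow> 'a list" where
  "dl i xs = take i xs @ drop (Suc i) xs"

lemma nths_dl: "nths xs (- {i}) = dl i xs"
proof (induction xs arbitrary: i)
  case Nil
  then show ?case by (simp add: dl_def)
next
  case (Cons a xs)
  show ?case
  proof (cases i)
    case 0
    have "{j. Suc j \<in> - {0::nat}} = UNIV" by auto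
    then show ?thesis using 0 by (simp add: nths_Cons dl_def nths_all)
  next
    case (Suc k)
    have "{j. Suc j \<in> - {Suc k}} = - {k}" by auto
    then show ?thesis using Suc Cons.IH by (simp add: nths_Cons dl_def)
  qed
qed

lemma nths_UNIV': "nths xs (- {}) = xs"
  by (simp add: nths_all)

lemma nths_UNIV2: "nths xs UNIV = xs"
  by (simp add: nths_all)

lemma nth_dl: "i < length xs \<Longrightarrow> k < length xs - 1 \<Longrightarrow>
   dl i xs ! k = (if k < i then xs ! k else xs ! Suc k)"
  unfolding dl_def by (auto simp: nth_append min_def)

lemma length_dl: "i < length xs \<Longrightarrow> length (dl i xs) = length xs - 1"
  by (simp add: dl_def)

lemma dl_comm: assumes "i < j" "j < length w" shows "dl (j - 1) (dl i w) = dl i (dl j w)"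
  apply (rule nth_equalityI)
  using assms by (auto simp: length_dl nth_dl)

lemma dl_eq_nth:
  assumes "i < length x" "j < length y" "length x = length y" "dl i x = dl j y" "k < length x - 1"
  shows "(if k < i then x ! k else x ! Suc k) = (if k < j then y ! k else y ! Suc k)"
proof -
  have "dl i x ! k = dl j y ! k" using assms(4) by simp
  moreover have "dl i x ! k = (if k < i then x ! k else x ! Suc k)"
    by (rule nth_dl) (use assms in auto)
  moreover have "dl j y ! k = (if k < j then y ! k else y ! Suc k)"
    by (rule nth_dl) (use assms in auto)
  ultimately show ?thesis by simp
qed

lemma nth_constr:
  assumes "j < length x" "length x = length y" "k < Suc (length x)"
  shows "(take (Suc j) x @ drop j y) ! k = (if k \<le> j then x ! k else y ! (k - 1))"
proof (cases "k \<le> j")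
  case True
  then show ?thesis using assms by (simp add: nth_append)
next
  case False
  hence "length (take (Suc j) x) = Suc j" using assms by simp
  hence "(take (Suc j) x @ drop j y) ! k = drop j y ! (k - Suc j)"
    using False by (simp add: nth_append)
  also have "\<dots> = y ! (j + (k - Suc j))" using assms False by simp
  also have "j + (k - Suc j) = k - 1" using False by simp
  finally show ?thesis using False by simp
qed

lemma ins_constr1:
  assumes "i \<le> j" "j < length x" "length x = length y" "dl i x = dl j y"
  shows "dl i (take (Suc j) x @ drop j y) = y"
proof (rule nth_equalityI)
  show "length (dl i (take (Suc j) x @ drop j y)) = length y"
    using assms by (simp add: dl_def)
next
  fix k assume k: "k < length (dl i (take (Suc j) x @ drop j y))"
  hence kl: "k < length x" using assms by (simp add: dl_def)
  have L: "length (take (Suc j) x @ drop j y) = Suc (length x)" using assms by simp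
  have "dl i (take (Suc j) x @ drop j y) ! k =
      (if k < i then (take (Suc j) x @ drop j y) ! k else (take (Suc j) x @ drop j y) ! Suc k)"
    using nth_dl[of i "take (Suc j) x @ drop j y" k] L kl assms by simp
  also have "\<dots> = y ! k"
  proof (cases "k < i")
    case True
    then show ?thesis using dl_eq_nth[OF _ _ assms(3,4), of k] assms kl
      by (simp add: nth_constr)
  next
    case False
    show ?thesis
    proof (cases "Suc k \<le> j")
      case True
      then show ?thesis using False dl_eq_nth[OF _ _ assms(3,4), of k] assms kl
        by (simp add: nth_constr)
    next
      case F2: False
      then show ?thesis using False assms kl by (simp add: nth_constr)
    qed
  qed
  finally show "dl i (take (Suc j) x @ drop j y) ! k = y ! k" .
qed

lemma ins_constr2:
  assumes "i \<le> j" "j < length x" "length x = length y" "dl i x = dl j y"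
  shows "dl (Suc j) (take (Suc j) x @ drop j y) = x"
proof (rule nth_equalityI)
  show "length (dl (Suc j) (take (Suc j) x @ drop j y)) = length x"
    using assms by (simp add: dl_def)
next
  fix k assume k: "k < length (dl (Suc j) (take (Suc j) x @ drop j y))"
  hence kl: "k < length x" using assms by (simp add: dl_def)
  have L: "length (take (Suc j) x @ drop j y) = Suc (length x)" using assms by simp
  have "dl (Suc j) (take (Suc j) x @ drop j y) ! k =
      (if k < Suc j then (take (Suc j) x @ drop j y) ! k else (take (Suc j) x @ drop j y) ! Suc k)"
    using nth_dl[of "Suc j" "take (Suc j) x @ drop j y" k] L kl assms by simp
  also have "\<dots> = x ! k"
  proof (cases "k < Suc j")
    case True
    then show ?thesis using assms kl by (simp add: nth_constr)
  next
    case False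
    then obtain k' where k': "k = Suc k'" by (cases k) auto
    show ?thesis using False dl_eq_nth[OF _ _ assms(3,4), of k'] assms kl k'
        by (simp add: nth_constr)
  qed
  finally show "dl (Suc j) (take (Suc j) x @ drop j y) ! k = x ! k" .
qed

lemma Del10: "Del 1 0 X = {dl i X | i. i < length X}"
proof -
  have "Del 1 0 X = {nths X (- R) | R. R \<subseteq> {..<length X} \<and> card R = 1}"
    unfolding Del_def del_rc_def nrows_def
  proof (intro set_eqI iffI)
    fix Z assume "Z \<in> {map (\<lambda>r. nths r (- C)) (nths X (- R)) |R C.
         R \<subseteq> {..<length X} \<and> card R = 1 \<and> C \<subseteq> {..<ncols X} \<and> card C = 0}"
    then obtain R C where "Z = map (\<lambda>r. nths r (- C)) (nths X (- R))" "R \<subseteq> {..<length X}"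
      "card R = 1" "C \<subseteq> {..<ncols X}" "card C = 0" by blast
    moreover have "C = {}" using calculation finite_subset[of C "{..<ncols X}"] by auto
    ultimately show "Z \<in> {nths X (- R) | R. R \<subseteq> {..<length X} \<and> card R = 1}"
      by (auto simp: nths_UNIV' nths_UNIV2)
  next
    fix Z assume "Z \<in> {nths X (- R) | R. R \<subseteq> {..<length X} \<and> card R = 1}"
    then obtain R where RR: "Z = nths X (- R)" "R \<subseteq> {..<length X}" "card R = 1" by blast
    show "Z \<in> {map (\<lambda>r. nths r (- C)) (nths X (- R)) |R C.
         R \<subseteq> {..<length X} \<and> card R = 1 \<and> C \<subseteq> {..<ncols X} \<and> card C = 0}"
      apply (rule CollectI, rule exI[of _ R], rule exI[of _ "{}"]) using RR by (simp add: nths_UNIV2)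
  qed
  also have "\<dots> = {dl i X | i. i < length X}"
  proof (intro set_eqI iffI)
    fix Z assume "Z \<in> {nths X (- R) | R. R \<subseteq> {..<length X} \<and> card R = 1}"
    then obtain R where R: "Z = nths X (- R)" "R \<subseteq> {..<length X}" "card R = 1" by blast
    have "card R = Suc 0" using R by simp
    then obtain i where "R = {i}" by (auto simp: card_1_singleton_iff)
    then show "Z \<in> {dl i X | i. i < length X}" using R by (auto simp: nths_dl)
  next
    fix Z assume "Z \<in> {dl i X | i. i < length X}"
    then obtain i where "Z = dl i X" "i < length X" by blast
    then show "Z \<in> {nths X (- R) | R. R \<subseteq> {..<length X} \<and> card R = 1}"
      by (intro CollectI exI[of _ "{i}"]) (simp add: nths_dl)
  qed
  finally show ?thesis .
qed

lemma Del01: "Del 0 1 X = {map (dl j) X | j. j < ncols X}"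
proof -
  have "Del 0 1 X = {map (\<lambda>r. nths r (- C)) X | C. C \<subseteq> {..<ncols X} \<and> card C = 1}"
    unfolding Del_def del_rc_def nrows_def
  proof (intro set_eqI iffI)
    fix Z assume "Z \<in> {map (\<lambda>r. nths r (- C)) (nths X (- R)) |R C.
         R \<subseteq> {..<length X} \<and> card R = 0 \<and> C \<subseteq> {..<ncols X} \<and> card C = 1}"
    then obtain R C where "Z = map (\<lambda>r. nths r (- C)) (nths X (- R))" "R \<subseteq> {..<length X}"
      "card R = 0" "C \<subseteq> {..<ncols X}" "card C = 1" by blast
    moreover have "R = {}" using calculation finite_subset[of R "{..<length X}"] by auto
    ultimately show "Z \<in> {map (\<lambda>r. nths r (- C)) X | C. C \<subseteq> {..<ncols X} \<and> card C = 1}"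
      by (auto simp: nths_UNIV' nths_UNIV2)
  next
    fix Z assume "Z \<in> {map (\<lambda>r. nths r (- C)) X | C. C \<subseteq> {..<ncols X} \<and> card C = 1}"
    then obtain C where CC: "Z = map (\<lambda>r. nths r (- C)) X" "C \<subseteq> {..<ncols X}" "card C = 1" by blast
    show "Z \<in> {map (\<lambda>r. nths r (- C)) (nths X (- R)) |R C.
         R \<subseteq> {..<length X} \<and> card R = 0 \<and> C \<subseteq> {..<ncols X} \<and> card C = 1}"
      apply (rule CollectI, rule exI[of _ "{}"], rule exI[of _ C]) using CC by (simp add: nths_UNIV2)
  qed
  also have "\<dots> = {map (dl j) X | j. j < ncols X}"
  proof (intro set_eqI iffI)
    fix Z assume "Z \<in> {map (\<lambda>r. nths r (- C)) X | C. C \<subseteq> {..<ncols X} \<and> card C = 1}"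
    then obtain C where R: "Z = map (\<lambda>r. nths r (- C)) X" "C \<subseteq> {..<ncols X}" "card C = 1" by blast
    have "card C = Suc 0" using R by simp
    then obtain i where "C = {i}" by (auto simp: card_1_singleton_iff)
    then show "Z \<in> {map (dl j) X | j. j < ncols X}" using R by (auto simp: nths_dl)
  next
    fix Z assume "Z \<in> {map (dl j) X | j. j < ncols X}"
    then obtain i where "Z = map (dl i) X" "i < ncols X" by blast
    then show "Z \<in> {map (\<lambda>r. nths r (- C)) X | C. C \<subseteq> {..<ncols X} \<and> card C = 1}"
      by (intro CollectI exI[of _ "{i}"]) (simp add: nths_dl)
  qed
  finally show ?thesis .
qed

lemma mem_Del10: "Z \<in> Del 1 0 W \<longleftrightarrow> (\<exists>i<length W. Z = dl i W)"
  unfolding Del10 by blast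

lemma mem_Del01: "Z \<in> Del 0 1 W \<longleftrightarrow> (\<exists>i<ncols W. Z = map (dl i) W)"
  unfolding Del01 by blast

lemma ncols_arr: "is_array a b X \<Longrightarrow> a \<ge> 1 \<Longrightarrow> ncols X = b"
  by (cases X) (auto simp: ncols_def is_array_def)

lemma set_constr: "set (take a X @ drop b Y) \<subseteq> set X \<union> set Y"
  by (auto dest: in_set_takeD in_set_dropD)

lemma rows_fwd:
  assumes "length X = length Y" "i < length X" "j < length Y" "dl i X = dl j Y"
  shows "\<exists>W i' j'. i' < length W \<and> j' < length W \<and> length W = Suc (length X) \<and>
     set W \<subseteq> set X \<union> set Y \<and> dl i' W = X \<and> dl j' W = Y"
proof (cases "i \<le> j")
  case True
  define W where "W = take (Suc j) X @ drop j Y"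
  have jx: "j < length X" using assms(3,1) by simp
  have f1: "dl i W = Y" unfolding W_def by (rule ins_constr1[OF True jx assms(1,4)])
  have f2: "dl (Suc j) W = X" unfolding W_def by (rule ins_constr2[OF True jx assms(1,4)])
  have f3: "length W = Suc (length X)" using assms by (simp add: W_def)
  have f4: "set W \<subseteq> set X \<union> set Y" unfolding W_def by (rule set_constr)
  have f5: "Suc j < length W" "i < length W" using assms True by (auto simp: W_def)
  show ?thesis
    apply (rule exI[of _ W], rule exI[of _ "Suc j"], rule exI[of _ i])
    using f1 f2 f3 f4 f5 by simp
next
  case False
  define W where "W = take (Suc i) Y @ drop i X"
  have ji: "j \<le> i" using False by simp
  have iy: "i < length Y" using assms(2,1) by simp
  have f1: "dl j W = X" unfolding W_def by (rule ins_constr1[OF ji iy assms(1)[symmetric] assms(4)[symmetric]])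
  have f2: "dl (Suc i) W = Y" unfolding W_def by (rule ins_constr2[OF ji iy assms(1)[symmetric] assms(4)[symmetric]])
  have f3: "length W = Suc (length X)" using assms by (simp add: W_def)
  have f4: "set W \<subseteq> set X \<union> set Y" unfolding W_def by (subst Un_commute) (rule set_constr)
  have f5: "Suc i < length W" "j < length W" using assms False by (auto simp: W_def)
  show ?thesis
    apply (rule exI[of _ W], rule exI[of _ j], rule exI[of _ "Suc i"])
    using f1 f2 f3 f4 f5 by simp
qed

lemma rows_bwd:
  assumes "length W \<ge> 2" "i < length W" "j < length W"
  shows "\<exists>i' j'. i' < length W - 1 \<and> j' < length W - 1 \<and> dl i' (dl i W) = dl j' (dl j W)"
proof -
  consider "i = j" | "i < j" | "j < i" by arith
  then show ?thesis
  proof cases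
    case 1 then show ?thesis using assms by (intro exI[of _ 0]) auto
  next
    case 2 show ?thesis
    proof -
      have "dl (j - 1) (dl i W) = dl i (dl j W)" using dl_comm[of i j W] \<open>i < j\<close> assms by simp
      moreover have "j - 1 < length W - 1" "i < length W - 1" using \<open>i < j\<close> assms by auto
      ultimately show ?thesis by blast
    qed
  next
    case 3 show ?thesis
    proof -
      have "dl j (dl i W) = dl (i - 1) (dl j W)" using dl_comm[of j i W] \<open>j < i\<close> assms by simp
      moreover have "i - 1 < length W - 1" "j < length W - 1" using \<open>j < i\<close> assms by auto
      ultimately show ?thesis by blast
    qed
  qed
qed

lemma cols_fwd0:
  assumes "length X = m" "length Y = m" "\<forall>r\<in>set X. length r = n" "\<forall>r\<in>set Y. length r = n"
    "i \<le> j" "j < n" "map (dl i) X = map (dl j) Y"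
  shows "\<exists>W. length W = m \<and> (\<forall>r\<in>set W. length r = Suc n) \<and>
     map (dl (Suc j)) W = X \<and> map (dl i) W = Y"
proof -
  define W where "W = map (\<lambda>k. take (Suc j) (X ! k) @ drop j (Y ! k)) [0..<m]"
  have eq: "dl i (X ! k) = dl j (Y ! k)" if "k < m" for k
    using arg_cong[OF assms(7), of "\<lambda>l. l ! k"] that assms(1,2) by simp
  have lx: "length (X ! k) = n" if "k < m" for k using assms(1,3) that by auto
  have ly: "length (Y ! k) = n" if "k < m" for k using assms(2,4) that by auto
  have "length W = m" by (simp add: W_def)
  moreover have "\<forall>r\<in>set W. length r = Suc n"
    using lx ly assms(6) by (auto simp: W_def)
  moreover have "map (dl (Suc j)) W = X"
  proof (rule nth_equalityI)
    fix k assume "k < length (map (dl (Suc j)) W)"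
    hence k: "k < m" by (simp add: W_def)
    show "map (dl (Suc j)) W ! k = X ! k"
      using ins_constr2[OF assms(5) _ _ eq[OF k]] lx[OF k] ly[OF k] k assms(6)
      by (simp add: W_def)
  qed (simp add: W_def assms)
  moreover have "map (dl i) W = Y"
  proof (rule nth_equalityI)
    fix k assume "k < length (map (dl i) W)"
    hence k: "k < m" by (simp add: W_def)
    show "map (dl i) W ! k = Y ! k"
      using ins_constr1[OF assms(5) _ _ eq[OF k]] lx[OF k] ly[OF k] k assms(6)
      by (simp add: W_def)
  qed (simp add: W_def assms)
  ultimately show ?thesis by blast
qed

lemma cols_fwd:
  assumes "length X = m" "length Y = m" "\<forall>r\<in>set X. length r = n" "\<forall>r\<in>set Y. length r = n"
    "i < n" "j < n" "map (dl i) X = map (dl j) Y"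
  shows "\<exists>W i' j'. i' < Suc n \<and> j' < Suc n \<and> length W = m \<and> (\<forall>r\<in>set W. length r = Suc n) \<and>
     map (dl i') W = X \<and> map (dl j') W = Y"
proof (cases "i \<le> j")
  case True
  from cols_fwd0[OF assms(1-4) True assms(6,7)] obtain W where
    W: "length W = m" "\<forall>r\<in>set W. length r = Suc n" "map (dl (Suc j)) W = X" "map (dl i) W = Y"
    by blast
  have ij: "Suc j < Suc n" "i < Suc n" using assms(5,6) by simp_all
  show ?thesis
    apply (rule exI[of _ W], rule exI[of _ "Suc j"], rule exI[of _ i])
    using W ij by simp
next
  case False
  then have "j \<le> i" by simp
  from cols_fwd0[OF assms(2,1,4,3) this assms(5) assms(7)[symmetric]] obtain W where
    W: "length W = m" "\<forall>r\<in>set W. length r = Suc n" "map (dl (Suc i)) W = Y" "map (dl j) W = X"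
    by blast
  have ij: "Suc i < Suc n" "j < Suc n" using assms(5,6) by simp_all
  show ?thesis
    apply (rule exI[of _ W], rule exI[of _ j], rule exI[of _ "Suc i"])
    using W ij by simp
qed

lemma cols_bwd:
  assumes "n \<ge> 1" "\<forall>r\<in>set W. length r = Suc n" "i < Suc n" "j < Suc n"
  shows "\<exists>i' j'. i' < n \<and> j' < n \<and> map (dl i') (map (dl i) W) = map (dl j') (map (dl j) W)"
proof -
  consider "i = j" | "i < j" | "j < i" by arith
  then show ?thesis
  proof cases
    case 1 then show ?thesis using assms by (intro exI[of _ 0]) auto
  next
    case 2 show ?thesis
    proof -
      have "dl (j - 1) (dl i x) = dl i (dl j x)" if "x \<in> set W" for x
        using dl_comm[of i j x] \<open>i < j\<close> assms that by simp
      then have "map (dl (j - 1)) (map (dl i) W) = map (dl i) (map (dl j) W)" by simp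
      moreover have "j - 1 < n" "i < n" using \<open>i < j\<close> assms by auto
      ultimately show ?thesis by blast
    qed
  next
    case 3 show ?thesis
    proof -
      have "dl j (dl i x) = dl (i - 1) (dl j x)" if "x \<in> set W" for x
        using dl_comm[of j i x] \<open>j < i\<close> assms that by simp
      then have "map (dl j) (map (dl i) W) = map (dl (i - 1)) (map (dl j) W)" by simp
      moreover have "i - 1 < n" "j < n" using \<open>j < i\<close> assms by auto
      ultimately show ?thesis by blast
    qed
  qed
qed

theorem lemma1:
  fixes m :: nat and X Y :: barray
  assumes "m \<ge> 1" and "is_array m m X" and "is_array m m Y"
  shows "(Del 1 0 X \<inter> Del 1 0 Y \<noteq> {} \<longleftrightarrow> Ins 1 0 X \<inter> Ins 1 0 Y \<noteq> {})
       \<and> (Del 0 1 X \<inter> Del 0 1 Y \<noteq> {} \<longleftrightarrow> Ins 0 1 X \<inter> Ins 0 1 Y \<noteq> {})"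
proof -
  have ncX: "ncols X = m" by (rule ncols_arr[OF assms(2,1)])
  have ncY: "ncols Y = m" by (rule ncols_arr[OF assms(3,1)])
  have lX: "length X = m" and rX: "\<forall>r\<in>set X. length r = m" using assms(2) by (auto simp: is_array_def)
  have lY: "length Y = m" and rY: "\<forall>r\<in>set Y. length r = m" using assms(3) by (auto simp: is_array_def)
  have InsR: "Ins 1 0 Z = {W. length W = Suc m \<and> (\<forall>r\<in>set W. length r = m) \<and> (\<exists>i<length W. Z = dl i W)}"
    if "is_array m m Z" for Z
  proof -
    have l: "length Z = m" using that by (simp add: is_array_def)
    have nc: "ncols Z = m" by (rule ncols_arr[OF that assms(1)])
    show ?thesis unfolding Ins_def nrows_def l nc is_array_def mem_Del10
      by (intro Collect_cong) simp
  qed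
  have InsC: "Ins 0 1 Z = {W. length W = m \<and> (\<forall>r\<in>set W. length r = Suc m) \<and> (\<exists>i<Suc m. Z = map (dl i) W)}"
    if "is_array m m Z" for Z
  proof -
    have l: "length Z = m" using that by (simp add: is_array_def)
    have nc: "ncols Z = m" by (rule ncols_arr[OF that assms(1)])
    have ncW: "ncols W = Suc m" if "length W = m" "\<forall>r\<in>set W. length r = Suc m" for W
      by (rule ncols_arr[of m]) (use that assms(1) in \<open>simp_all add: is_array_def\<close>)
    show ?thesis unfolding Ins_def nrows_def l nc is_array_def mem_Del01
    proof (intro Collect_cong)
      fix W
      show "((length W = m + 0 \<and> (\<forall>r\<in>set W. length r = m + 1)) \<and> (\<exists>i<ncols W. Z = map (dl i) W)) =
        (length W = m \<and> (\<forall>r\<in>set W. length r = Suc m) \<and> (\<exists>i<Suc m. Z = map (dl i) W))"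
        using ncW[of W] by auto
    qed
  qed
  have P1: "Del 1 0 X \<inter> Del 1 0 Y \<noteq> {} \<longleftrightarrow> Ins 1 0 X \<inter> Ins 1 0 Y \<noteq> {}"
  proof
    assume "Del 1 0 X \<inter> Del 1 0 Y \<noteq> {}"
    then obtain i j where ij: "i < length X" "j < length Y" "dl i X = dl j Y"
      unfolding Int_iff ex_in_conv[symmetric] mem_Del10 by auto
    from rows_fwd[OF _ ij(1,2,3)] lX lY obtain W i' j' where
      W: "i' < length W" "j' < length W" "length W = Suc (length X)"
      "set W \<subseteq> set X \<union> set Y" "dl i' W = X" "dl j' W = Y" by auto
    have "\<forall>r\<in>set W. length r = m" using W(4) rX rY by blast
    then have "W \<in> Ins 1 0 X \<inter> Ins 1 0 Y"
      using W lX unfolding InsR[OF assms(2)] InsR[OF assms(3)] by auto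
    then show "Ins 1 0 X \<inter> Ins 1 0 Y \<noteq> {}" by blast
  next
    assume "Ins 1 0 X \<inter> Ins 1 0 Y \<noteq> {}"
    then obtain W where WX: "W \<in> Ins 1 0 X" and WY: "W \<in> Ins 1 0 Y" by blast
    have W0': "length W = Suc m \<and> (\<exists>i<length W. X = dl i W)"
      using WX unfolding InsR[OF assms(2)] mem_Collect_eq by (elim conjE) (intro conjI)
    note W0 = conjunct1[OF W0'] conjunct2[OF W0']
    have W1': "length W = Suc m \<and> (\<exists>j<length W. Y = dl j W)"
      using WY unfolding InsR[OF assms(3)] mem_Collect_eq by (elim conjE) (intro conjI)
    note W1 = conjunct2[OF W1']
    obtain i where i: "i < length W" "X = dl i W" using W0(2) by blast
    obtain j where j: "j < length W" "Y = dl j W" using W1 by blast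
    note W = W0(1) i j
    have "length W \<ge> 2" using W(1) assms(1) by simp
    from rows_bwd[OF this W(2,4)] obtain i' j' where
      "i' < length W - 1" "j' < length W - 1" "dl i' (dl i W) = dl j' (dl j W)" by blast
    then have "dl i' X \<in> Del 1 0 X \<inter> Del 1 0 Y"
      using W lX lY unfolding Int_iff mem_Del10 by auto
    then show "Del 1 0 X \<inter> Del 1 0 Y \<noteq> {}" by blast
  qed
  have P2: "Del 0 1 X \<inter> Del 0 1 Y \<noteq> {} \<longleftrightarrow> Ins 0 1 X \<inter> Ins 0 1 Y \<noteq> {}"
  proof
    assume "Del 0 1 X \<inter> Del 0 1 Y \<noteq> {}"
    then obtain i j where ij: "i < m" "j < m" "map (dl i) X = map (dl j) Y"
      using ncX ncY unfolding Int_iff ex_in_conv[symmetric] mem_Del01 by auto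
    from cols_fwd[OF lX lY rX rY ij] obtain W i' j' where
      W: "i' < Suc m" "j' < Suc m" "length W = m" "\<forall>r\<in>set W. length r = Suc m"
      "map (dl i') W = X" "map (dl j') W = Y" by blast
    then have "W \<in> Ins 0 1 X \<inter> Ins 0 1 Y"
      unfolding InsC[OF assms(2)] InsC[OF assms(3)] by auto
    then show "Ins 0 1 X \<inter> Ins 0 1 Y \<noteq> {}" by blast
  next
    assume "Ins 0 1 X \<inter> Ins 0 1 Y \<noteq> {}"
    then obtain W where WX: "W \<in> Ins 0 1 X" and WY: "W \<in> Ins 0 1 Y" by blast
    have W0: "length W = m" "\<forall>r\<in>set W. length r = Suc m" "\<exists>i<Suc m. X = map (dl i) W"
      using WX unfolding InsC[OF assms(2)] by simp_all
    have W1: "\<exists>j<Suc m. Y = map (dl j) W"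
      using WY unfolding InsC[OF assms(3)] by simp
    obtain i where i: "i < Suc m" "X = map (dl i) W" using W0(3) by blast
    obtain j where j: "j < Suc m" "Y = map (dl j) W" using W1 by blast
    note W = W0(1,2) i j
    from cols_bwd[OF assms(1) W(2,3,5)] obtain i' j' where
      "i' < m" "j' < m" "map (dl i') (map (dl i) W) = map (dl j') (map (dl j) W)" by blast
    then have "map (dl i') X \<in> Del 0 1 X \<inter> Del 0 1 Y"
      using W ncX ncY unfolding Int_iff mem_Del01 by auto
    then show "Del 0 1 X \<inter> Del 0 1 Y \<noteq> {}" by blast
  qed
  show ?thesis using P1 P2 by blast
qed

end
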